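(* Let $\lambda_1,\ldots,\lambda_k$ be integers, let $n_1,\ldots,n_k$ be positive integers and let $a_1,\ldots,a_k$ be integers with $0\leqslant a_s<n_s$ for each $s$. Let $p$ be a prime with $p>|S(n_1,\ldots,n_k)|$ and let $\zeta_p$ be any primitive $p$th root of unity. Then $$\sum_{\substack{1\leqslant s\leqslant k\\ x\equiv a_s \pmod{n_s}}}\lambda_s=0\quad\text{for all }x\in\mathbb Z$$ if and only if $$\sum_{s=1}^k\lambda_s\frac{\zeta_p^{a_s}}{1-\zeta_p^{n_s}}=0.$$
   Context: For positive integers $n_1,\ldots,n_k$, $S(n_1,\ldots,n_k)=\{r/n_s: r=0,\ldots,n_s-1;\ s=1,\ldots,k\}$, a set of rational numbers, and $|S(\cdot)|$ denotes its cardinality. *)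

theory Defs
  imports Complex_Main "HOL-Number_Theory.Cong"
begin

definition S_set :: "nat \<Rightarrow> (nat \<Rightarrow> nat) \<Rightarrow> rat set" where
  "S_set k n = {of_nat r / of_nat (n s) | r s. s \<in> {1..k} \<and> r < n s}"

definition primitive_root_of_unity :: "nat \<Rightarrow> complex \<Rightarrow> bool" where
  "primitive_root_of_unity m z \<longleftrightarrow> 0 < m \<and> z ^ m = 1 \<and> (\<forall>j\<in>{1..<m}. z ^ j \<noteq> 1)"

end

theory Submission
  imports Defs "HOL-Computational_Algebra.Polynomial"
begin


lemma mp_add: "map_poly (of_int::int\<Rightarrow>'a::comm_ring_1) (p+q) = map_poly of_int p + map_poly of_int q"
  by (rule poly_eqI) (simp add: coeff_map_poly)
lemma mp_diff: "map_poly (of_int::int\<Rightarrow>'a::comm_ring_1) (p-q) = map_poly of_int p - map_poly of_int q"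
  by (rule poly_eqI) (simp add: coeff_map_poly)
lemma mp_mult: "map_poly (of_int::int\<Rightarrow>'a::comm_ring_1) (p*q) = map_poly of_int p * map_poly of_int q"
  by (rule poly_eqI) (simp add: coeff_map_poly coeff_mult)
lemma mp_smult: "map_poly (of_int::int\<Rightarrow>'a::comm_ring_1) (smult c q) = smult (of_int c) (map_poly of_int q)"
  by (rule poly_eqI) (simp add: coeff_map_poly)
lemma mp_sum: "map_poly (of_int::int\<Rightarrow>'a::comm_ring_1) (\<Sum>x\<in>A. f x) = (\<Sum>x\<in>A. map_poly of_int (f x))"
  by (rule poly_eqI) (simp add: coeff_map_poly coeff_sum)

definition cyc :: "nat \<Rightarrow> int poly" where "cyc p = (\<Sum>j<p. monom 1 j)"

lemma coeff_cyc: "coeff (cyc p) i = (if i < p then 1 else 0)"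
  unfolding cyc_def coeff_sum by (simp add: coeff_monom)

lemma poly_cyc: "poly (map_poly of_int (cyc p)) (z::'a::comm_ring_1) = (\<Sum>j<p. z^j)"
  unfolding cyc_def mp_sum poly_sum by (simp add: map_poly_monom poly_monom)

lemma cyc_id: "[:0,1:]^p - 1 = ([:0,1:] - 1) * cyc p"
  unfolding cyc_def power_diff_1_eq by (simp add: monom_altdef)

lemma pcompose_power': "pcompose (r ^ n) q = (pcompose r q) ^ n"
  by (induction n) (simp_all add: pcompose_mult pcompose_1)

definition psi :: "nat \<Rightarrow> int poly" where "psi p = pcompose (cyc p) [:1,1:]"

lemma psi_id: "[:0,1:] * psi p = [:1,1:]^p - 1"
proof -
  have "pcompose ([:0,1:]^p - 1) [:1,1:] = pcompose (([:0,1:] - 1) * cyc p) [:1,1:]"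
    by (simp add: cyc_id)
  then show ?thesis
    by (simp add: pcompose_diff pcompose_power' pcompose_mult pcompose_1 psi_def pcompose_pCons one_pCons)
qed

lemma coeff_psi: "coeff (psi p) j = int (p choose Suc j)"
proof -
  have "coeff (psi p) j = coeff ([:0,1:] * psi p) (Suc j)" by simp
  also have "\<dots> = coeff ([:1,1:]^p - 1) (Suc j)" by (simp only: psi_id)
  also have "\<dots> = coeff ([:1,1:]^p) (Suc j)" by simp
  also have "\<dots> = int (p choose Suc j)"
  proof (cases "Suc j \<le> p")
    case True then show ?thesis by (simp add: coeff_linear_poly_power)
  next
    case False then show ?thesis by (simp add: coeff_eq_0 degree_linear_power)
  qed
  finally show ?thesis .
qed

lemma degree_psi: "p \<ge> 1 \<Longrightarrow> degree (psi p) = p - 1"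
proof (rule antisym)
  assume "p \<ge> 1"
  show "degree (psi p) \<le> p - 1" by (rule degree_le) (auto simp: coeff_psi)
  show "p - 1 \<le> degree (psi p)" by (rule le_degree) (use \<open>p \<ge> 1\<close> in \<open>simp add: coeff_psi\<close>)
qed

lemma degree_cyc: "p \<ge> 1 \<Longrightarrow> degree (cyc p) = p - 1"
  using degree_psi[of p] by (simp add: psi_def degree_pcompose)

lemma lead_cyc: "p \<ge> 1 \<Longrightarrow> lead_coeff (cyc p) = 1"
  by (simp add: degree_cyc coeff_cyc)

lemma eisen_aux:
  fixes A B :: "int poly" and q :: int
  assumes q: "prime q" and F: "F = A * B"
    and dA: "degree A > 0" and dB: "degree B > 0"
    and low: "\<forall>i<degree F. q dvd coeff F i"
    and lead: "\<not> q dvd lead_coeff F"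
    and a0: "q dvd coeff A 0" and b0: "\<not> q dvd coeff B 0"
  shows False
proof -
  have "A \<noteq> 0" "B \<noteq> 0" using dA dB by auto
  have dF: "degree F = degree A + degree B" using F \<open>A\<noteq>0\<close> \<open>B\<noteq>0\<close> by (simp add: degree_mult_eq)
  have "lead_coeff F = lead_coeff A * lead_coeff B" using F by (simp add: lead_coeff_mult)
  hence ex: "\<not> q dvd coeff A (degree A)" using lead by auto
  define i where "i = (LEAST i. \<not> q dvd coeff A i)"
  have ai: "\<not> q dvd coeff A i" unfolding i_def by (rule LeastI[of _ "degree A"]) (rule ex)
  have ile: "i \<le> degree A" unfolding i_def by (rule Least_le) (rule ex)
  have below: "\<And>j. j < i \<Longrightarrow> q dvd coeff A j" unfolding i_def using not_less_Least by blast
  have "i \<noteq> 0" using ai a0 by (metis)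
  then obtain i' where i': "i = Suc i'" by (cases i) auto
  have "coeff F i = (\<Sum>j\<le>i. coeff A j * coeff B (i-j))" using F by (simp add: coeff_mult)
  also have "\<dots> = (\<Sum>j\<le>i'. coeff A j * coeff B (i-j)) + coeff A i * coeff B 0"
    using i' by simp
  finally have eq: "coeff F i = (\<Sum>j\<le>i'. coeff A j * coeff B (i-j)) + coeff A i * coeff B 0" .
  have "q dvd (\<Sum>j\<le>i'. coeff A j * coeff B (i-j))"
    by (rule dvd_sum) (use below i' in auto)
  moreover have "q dvd coeff F i" using low ile dB dF by auto
  ultimately have "q dvd coeff A i * coeff B 0" using eq by (metis dvd_add_right_iff)
  thus False using ai b0 q by (simp add: prime_dvd_mult_iff)
qed

lemma eisen:
  fixes A B :: "int poly" and q :: int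
  assumes q: "prime q" and F: "F = A * B"
    and low: "\<forall>i<degree F. q dvd coeff F i"
    and lead: "\<not> q dvd lead_coeff F"
    and c0: "\<not> q^2 dvd coeff F 0"
  shows "degree A = 0 \<or> degree B = 0"
proof (rule ccontr)
  assume "\<not> (degree A = 0 \<or> degree B = 0)"
  hence dA: "degree A > 0" and dB: "degree B > 0" by auto
  have "A \<noteq> 0" "B \<noteq> 0" using dA dB by auto
  have dF: "degree F = degree A + degree B" using F \<open>A\<noteq>0\<close> \<open>B\<noteq>0\<close> by (simp add: degree_mult_eq)
  have f0: "coeff F 0 = coeff A 0 * coeff B 0" using F by (simp add: coeff_mult)
  have "q dvd coeff F 0" using low dF dA by auto
  hence "q dvd coeff A 0 \<or> q dvd coeff B 0" using f0 q by (simp add: prime_dvd_mult_iff)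
  moreover have "\<not> (q dvd coeff A 0 \<and> q dvd coeff B 0)"
  proof
    assume "q dvd coeff A 0 \<and> q dvd coeff B 0"
    hence "q^2 dvd coeff F 0" using f0 by (auto simp: power2_eq_square intro: mult_dvd_mono)
    thus False using c0 by simp
  qed
  moreover have F': "F = B * A" using F by (simp add: mult.commute)
  ultimately show False
    using eisen_aux[OF q F dA dB low lead] eisen_aux[OF q F' dB dA low lead] by blast
qed

lemma psi_irred:
  assumes p: "prime p" and AB: "psi p = A * B"
  shows "degree A = 0 \<or> degree B = 0"
proof -
  have p1: "p > 1" using p prime_gt_1_nat by auto
  hence p1: "p \<ge> 1" "p > 1" by auto
  show ?thesis
  proof (rule eisen[OF _ AB])
    show "prime (int p)" using p by simp
    show "\<forall>i<degree (psi p). int p dvd coeff (psi p) i"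
    proof (intro allI impI)
      fix i assume "i < degree (psi p)"
      hence "Suc i < p" using degree_psi[OF p1(1)] by simp
      hence "p dvd p choose Suc i" using dvd_choose_prime p by auto
      thus "int p dvd coeff (psi p) i" by (simp add: coeff_psi)
    qed
    show "\<not> int p dvd lead_coeff (psi p)" using p1 p
      by (simp add: degree_psi coeff_psi)
    show "\<not> (int p)^2 dvd coeff (psi p) 0"
    proof
      assume "(int p)^2 dvd coeff (psi p) 0"
      hence "int p * int p dvd int p * 1" by (simp add: coeff_psi power2_eq_square)
      hence "int p dvd 1" using p1 by (subst (asm) dvd_mult_cancel_left) auto
      thus False using p1 by simp
    qed
  qed
qed



lemma geom_zero: fixes z :: complex assumes "z^p = 1" "z \<noteq> 1" shows "(\<Sum>j<p. z^j) = 0"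
proof -
  have "z^p - 1 = (z - 1) * (\<Sum>j<p. z^j)" by (rule power_diff_1_eq)
  thus ?thesis using assms by simp
qed

lemma content_cyc: "p \<ge> 1 \<Longrightarrow> content (cyc p) = 1"
proof -
  assume "p \<ge> 1"
  have "content (cyc p) dvd 1" using content_dvd_coeff[of "cyc p" "degree (cyc p)"] lead_cyc[OF \<open>p\<ge>1\<close>] by simp
  moreover have "content (cyc p) \<ge> 0" by (metis abs_of_nonneg normalize_content abs_ge_zero normalize_int_def)
  ultimately show ?thesis by simp
qed

lemma K:
  fixes \<zeta> :: complex and Q :: "int poly"
  assumes p: "prime p" and z1: "\<zeta>^p = 1" and zn1: "\<zeta> \<noteq> 1"
    and Q: "Q \<noteq> 0" "poly (map_poly of_int Q) \<zeta> = 0"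
  shows "degree Q \<ge> p - 1"
proof -
  have p1: "p > 1" using p prime_gt_1_nat by auto
  define P where "P = (\<lambda>G::int poly. G \<noteq> 0 \<and> poly (map_poly of_int G) \<zeta> = 0)"
  define d where "d = (LEAST d. \<exists>G. P G \<and> degree G = d)"
  have exQ: "\<exists>G. P G \<and> degree G = degree Q" using Q P_def by blast
  have "\<exists>G. P G \<and> degree G = d" unfolding d_def by (rule LeastI_ex) (use exQ in blast)
  then obtain G0 where G0: "P G0" "degree G0 = d" by blast
  have minim: "\<And>H. P H \<Longrightarrow> d \<le> degree H" unfolding d_def by (rule Least_le) auto
  have dQ: "d \<le> degree Q" using minim Q P_def by auto
  define G where "G = primitive_part G0"
  have G0nz: "G0 \<noteq> 0" using G0 P_def by auto
  have Gnz: "G \<noteq> 0" and dG: "degree G = d" and cG: "content G = 1"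
    using G0nz G0 by (auto simp: G_def)
  have "poly (map_poly of_int G0) \<zeta> = of_int (content G0) * poly (map_poly of_int G) \<zeta>"
    by (subst content_times_primitive_part[of G0, symmetric]) (simp only: G_def mp_smult poly_smult)
  hence evG: "poly (map_poly of_int G) \<zeta> = 0" using G0 P_def G0nz by simp
  obtain q r where qr: "pseudo_divmod (cyc p) G = (q, r)" by (cases "pseudo_divmod (cyc p) G") auto
  define c where "c = lead_coeff G ^ (Suc (degree (cyc p)) - degree G)"
  have eq: "smult c (cyc p) = G * q + r" and rdeg: "r = 0 \<or> degree r < degree G"
    using pseudo_divmod[OF Gnz qr] by (auto simp: c_def)
  have cnz: "c \<noteq> 0" using Gnz by (simp add: c_def)
  have evcyc: "poly (map_poly of_int (cyc p)) \<zeta> = 0" using geom_zero[OF z1 zn1] by (simp add: poly_cyc)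
  have "poly (map_poly of_int r) \<zeta> = poly (map_poly of_int (smult c (cyc p) - G * q)) \<zeta>"
    using eq by (simp add: algebra_simps)
  also have "\<dots> = 0" by (simp add: mp_diff mp_smult mp_mult evcyc evG)
  finally have evr: "poly (map_poly of_int r) \<zeta> = 0" .
  have r0: "r = 0"
  proof (rule ccontr)
    assume "r \<noteq> 0"
    hence "P r" using evr P_def by auto
    hence "d \<le> degree r" by (rule minim)
    thus False using rdeg \<open>r \<noteq> 0\<close> dG by auto
  qed
  have eq2: "smult c (cyc p) = G * q" using eq r0 by simp
  have qnz: "q \<noteq> 0" using eq2 cnz p1 lead_cyc[of p] by (auto)
  define H where "H = primitive_part q"
  have cH: "content H = 1" using qnz by (simp add: H_def)
  have "G * q = smult (content q) (G * H)" unfolding H_def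
    by (subst (1) content_times_primitive_part[of q, symmetric]) (simp del: content_times_primitive_part)
  hence eq3: "smult c (cyc p) = smult (content q) (G * H)" using eq2 by simp
  have "content (smult c (cyc p)) = normalize c" using content_cyc p1 by simp
  moreover have "content (smult (content q) (G * H)) = content q"
    using normalize_content[of q] by (simp add: content_mult cG cH)
  ultimately have cq: "content q = normalize c" using eq3 by simp
  have eq4: "smult c (cyc p) = smult \<bar>c\<bar> (G * H)" using eq3 cq by simp
  have "\<exists>H'. cyc p = G * H'"
  proof (cases "c > 0")
    case True
    then have "smult c (cyc p) = smult c (G * H)" using eq4 by simp
    then show ?thesis by (intro exI[of _ H]) (rule smult_cancel[OF cnz])
  next
    case False
    then have "smult c (cyc p) = smult c (G * (-H))" using eq4 by simp
    then show ?thesis by (intro exI[of _ "-H"]) (rule smult_cancel[OF cnz])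
  qed
  then obtain H' where fac: "cyc p = G * H'" by blast
  have "psi p = pcompose G [:1,1:] * pcompose H' [:1,1:]"
    unfolding psi_def using fac by (metis pcompose_mult)
  from psi_irred[OF p this] have "degree G = 0 \<or> degree H' = 0" by (simp add: degree_pcompose)
  thus ?thesis
  proof
    assume "degree G = 0"
    then obtain g where "G = [:g:]" by (metis degree_eq_zeroE)
    thus ?thesis using evG Gnz by (simp add: map_poly_pCons)
  next
    assume "degree H' = 0"
    moreover have "H' \<noteq> 0" using fac p1 lead_cyc[of p] by auto
    ultimately have "degree (cyc p) = degree G" using fac Gnz by (simp add: degree_mult_eq)
    thus ?thesis using degree_cyc[of p] p1 dG dQ by simp
  qed
qed



lemma conj_root:
  fixes \<zeta> w :: complex and Q :: "int poly"
  assumes p: "prime p" and z1: "\<zeta>^p = 1" and zn1: "\<zeta> \<noteq> 1"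
    and Q: "poly (map_poly of_int Q) \<zeta> = 0"
    and w: "w^p = 1" "w \<noteq> 1"
  shows "poly (map_poly of_int Q) w = 0"
proof -
  have p1: "p \<ge> 1" using p prime_gt_1_nat by (simp add: Suc_leI prime_gt_0_nat)
  have cnz: "cyc p \<noteq> 0" using lead_cyc[OF p1] by auto
  obtain q r where qr: "pseudo_divmod Q (cyc p) = (q, r)" by (cases "pseudo_divmod Q (cyc p)") auto
  have eq: "Q = cyc p * q + r" and rdeg: "r = 0 \<or> degree r < degree (cyc p)"
    using pseudo_divmod[OF cnz qr] lead_cyc[OF p1] by auto
  have evcyc: "poly (map_poly of_int (cyc p)) \<zeta> = 0" using geom_zero[OF z1 zn1] by (simp add: poly_cyc)
  have "poly (map_poly of_int r) \<zeta> = poly (map_poly of_int (Q - cyc p * q)) \<zeta>"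
    using eq by (simp add: algebra_simps)
  also have "\<dots> = 0" by (simp add: mp_diff mp_mult evcyc Q)
  finally have evr: "poly (map_poly of_int r) \<zeta> = 0" .
  have r0: "r = 0"
  proof (rule ccontr)
    assume "r \<noteq> 0"
    from K[OF p z1 zn1 this evr] rdeg \<open>r\<noteq>0\<close> degree_cyc[OF p1] show False by auto
  qed
  have evcw: "poly (map_poly of_int (cyc p)) w = 0" using geom_zero[OF w] by (simp add: poly_cyc)
  show ?thesis using eq r0 by (simp add: mp_mult evcw)
qed

lemma zeta_pow_eq1:
  assumes z: "primitive_root_of_unity p \<zeta>"
  shows "\<zeta>^m = 1 \<longleftrightarrow> p dvd m"
proof
  have p0: "p > 0" and zp: "\<zeta>^p = 1" and prim: "\<forall>j\<in>{1..<p}. \<zeta> ^ j \<noteq> 1"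
    using z by (auto simp: primitive_root_of_unity_def)
  have "\<zeta>^m = \<zeta>^(p * (m div p) + m mod p)" by (simp only: mult_div_mod_eq)
  also have "\<dots> = \<zeta>^(m mod p)" by (simp only: power_add power_mult zp power_one mult_1)
  finally have e: "\<zeta>^m = \<zeta>^(m mod p)" .
  { assume "\<zeta>^m = 1"
    hence "\<zeta>^(m mod p) = 1" using e by simp
    moreover have "m mod p < p" using p0 by simp
    ultimately have "m mod p = 0" using prim by (metis atLeastLessThan_iff less_one not_less)
    thus "p dvd m" by auto }
  { assume "p dvd m" thus "\<zeta>^m = 1" using e by simp }
qed

lemma cis_root_ne1:
  fixes d :: int
  assumes n: "n > 0" and d: "d \<noteq> 0" "\<bar>d\<bar> < int n"
  shows "cis (2 * pi * of_int d / real n) \<noteq> 1"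
proof
  assume "cis (2 * pi * of_int d / real n) = 1"
  hence "cos (2 * pi * of_int d / real n) = 1" by (metis cis.sel(1) one_complex.sel(1))
  then obtain k :: int where k: "2 * pi * of_int d / real n = of_int k * 2 * pi" by (auto simp: cos_one_2pi_int)
  hence "of_int d = real_of_int k * real n" using n by (simp add: field_simps)
  hence "d = k * int n" by (metis of_int_eq_iff of_int_mult of_int_of_nat_eq)
  thus False using d n by (cases "k = 0") (auto simp: abs_mult)
qed

lemma cis_root_pow: "n > 0 \<Longrightarrow> (cis (2 * pi * real j / real n))^n = 1"
proof -
  assume "n > 0"
  have "(cis (2 * pi * real j / real n))^n = cis (2 * pi * real j)" using \<open>n>0\<close> by (simp add: DeMoivre)
  also have "\<dots> = 1" by (simp add: cis_multiple_2pi)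
  finally show ?thesis .
qed



lemma orth:
  assumes n: "n > 0" and m: "m < n" and a: "a < n"
  shows "(\<Sum>j<n. cis (2 * pi * real j * (real m - real a) / real n)) = (if m = a then of_nat n else 0)"
proof -
  define v where "v = cis (2 * pi * of_int (int m - int a) / real n)"
  have vj: "\<And>j. cis (2 * pi * real j * (real m - real a) / real n) = v^j"
    unfolding v_def DeMoivre by (rule arg_cong[where f=cis]) simp
  show ?thesis
  proof (cases "m = a")
    case True then show ?thesis by simp
  next
    case False
    have vn1: "v \<noteq> 1" unfolding v_def using False m a n by (intro cis_root_ne1) auto
    have "v^n = cis (2 * pi * of_int (int m - int a))" unfolding v_def DeMoivre using n
      by (intro arg_cong[where f=cis]) simp
    also have "\<dots> = 1" by (rule cis_multiple_2pi) simp
    finally have "v^n = 1" .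
    hence "(\<Sum>j<n. v^j) = 0" using geom_zero vn1 by blast
    thus ?thesis using False by (simp add: vj)
  qed
qed

lemma PF:
  fixes z :: complex
  assumes n: "n > 0" and a: "a < n" and zn: "z^n \<noteq> 1"
  shows "z^a / (1 - z^n) = (\<Sum>j<n. cis (- (2*pi*real j*real a/real n)) / of_nat n / (1 - cis (2*pi*real j/real n) * z))"
proof -
  define w where "w j = cis (2*pi*real j/real n)" for j
  define c where "c j = cis (- (2*pi*real j*real a/real n)) / of_nat n" for j
  have wz: "(w j * z)^n = z^n" for j unfolding w_def power_mult_distrib using cis_root_pow[OF n] by simp
  have nz: "1 - w j * z \<noteq> 0" for j using wz[of j] zn by auto
  have geo: "1 - z^n = (1 - w j * z) * (\<Sum>m<n. (w j * z)^m)" for j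
  proof -
    define u where "u = w j * z"
    have "u^n - 1 = (u - 1) * (\<Sum>m<n. u^m)" by (rule power_diff_1_eq)
    hence "1 - u^n = (1 - u) * (\<Sum>m<n. u^m)" by (simp add: algebra_simps)
    thus ?thesis using wz[of j] unfolding u_def by simp
  qed
  have trm: "c j * (w j)^m * z^m = z^m / of_nat n * cis (2 * pi * real j * (real m - real a) / real n)" for j m
  proof -
    have "cis (- (2*pi*real j*real a/real n)) * (w j)^m = cis (2 * pi * real j * (real m - real a) / real n)"
      unfolding w_def DeMoivre cis_mult by (rule arg_cong[where f=cis]) (use n in \<open>simp add: field_simps\<close>)
    moreover have "c j * (w j)^m * z^m = (cis (- (2*pi*real j*real a/real n)) * (w j)^m) * z^m / of_nat n"
      unfolding c_def by (simp add: divide_simps)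
    ultimately show ?thesis by simp
  qed
  have "(\<Sum>j<n. c j / (1 - w j * z)) * (1 - z^n) = (\<Sum>j<n. c j / (1 - w j * z) * (1 - z^n))"
    by (simp add: sum_distrib_right)
  also have "\<dots> = (\<Sum>j<n. c j * (\<Sum>m<n. (w j * z)^m))"
  proof (rule sum.cong[OF refl])
    fix j assume "j \<in> {..<n}"
    show "c j / (1 - w j * z) * (1 - z^n) = c j * (\<Sum>m<n. (w j * z)^m)"
      by (subst geo[of j]) (use nz[of j] in simp)
  qed
  also have "\<dots> = (\<Sum>j<n. \<Sum>m<n. c j * (w j)^m * z^m)"
    by (simp add: sum_distrib_left power_mult_distrib mult.assoc)
  also have "\<dots> = (\<Sum>m<n. \<Sum>j<n. z^m / of_nat n * cis (2 * pi * real j * (real m - real a) / real n))"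
    by (subst sum.swap) (simp only: trm)
  also have "\<dots> = (\<Sum>m<n. z^m / of_nat n * (if m = a then of_nat n else 0))"
  proof (rule sum.cong[OF refl])
    fix m assume "m \<in> {..<n}"
    hence "m < n" by simp
    show "(\<Sum>j<n. z^m / of_nat n * cis (2 * pi * real j * (real m - real a) / real n)) = z^m / of_nat n * (if m = a then of_nat n else 0)"
      by (simp only: sum_distrib_left[symmetric] orth[OF n \<open>m<n\<close> a])
  qed
  also have "\<dots> = (\<Sum>m<n. if m = a then z^m else 0)"
    by (rule sum.cong[OF refl]) (use n in simp)
  also have "\<dots> = z^a" using a by simp
  finally have "(\<Sum>j<n. c j / (1 - w j * z)) * (1 - z^n) = z^a" .
  moreover have "1 - z^n \<noteq> 0" using zn by simp
  ultimately have "(\<Sum>j<n. c j / (1 - w j * z)) = z^a / (1 - z^n)" by (simp add: eq_divide_eq)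
  thus ?thesis unfolding c_def w_def by simp
qed

lemma Id1s:
  fixes z :: complex
  assumes n: "n > 0" and a: "a < n" and N: "N = n * M" and zn: "z^n \<noteq> 1"
  shows "z^a / (1 - z^n) * (1 - z^N) = (\<Sum>x<N. if x mod n = a then z^x else 0)"
proof -
  have "(z^n)^M - 1 = (z^n - 1) * (\<Sum>m<M. (z^n)^m)" by (rule power_diff_1_eq)
  hence geo: "1 - z^N = (1 - z^n) * (\<Sum>m<M. (z^n)^m)" unfolding N power_mult by (simp add: algebra_simps)
  have "1 - z^n \<noteq> 0" using zn by simp
  hence "z^a / (1 - z^n) * (1 - z^N) = z^a * (\<Sum>m<M. (z^n)^m)" by (subst geo) simp
  also have "\<dots> = (\<Sum>m<M. z^(a + n*m))" by (simp add: sum_distrib_left power_add power_mult)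
  also have "\<dots> = (\<Sum>x\<in>(\<lambda>m. a + n*m) ` {..<M}. z^x)"
    by (subst sum.reindex) (use n in \<open>auto simp: inj_on_def\<close>)
  also have "(\<lambda>m. a + n*m) ` {..<M} = {x\<in>{..<N}. x mod n = a}"
  proof (rule set_eqI, rule iffI)
    fix x assume "x \<in> (\<lambda>m. a + n*m) ` {..<M}"
    then obtain m where m: "m < M" "x = a + n*m" by auto
    have "a + n*m < n + n*m" using a by simp
    also have "\<dots> = n * Suc m" by simp
    also have "\<dots> \<le> n * M" using m by (intro mult_le_mono2) simp
    finally show "x \<in> {x\<in>{..<N}. x mod n = a}" using m a N by simp
  next
    fix x assume x: "x \<in> {x\<in>{..<N}. x mod n = a}"
    have xa: "x mod n = a" using x by simp
    have "x = x div n * n + x mod n" by simp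
    hence "x = a + n * (x div n)" unfolding xa by (simp add: mult.commute)
    moreover have "x div n < M" using x N n by (auto simp: div_less_iff_less_mult mult.commute)
    ultimately show "x \<in> (\<lambda>m. a + n*m) ` {..<M}" by blast
  qed
  also have "(\<Sum>x\<in>{x\<in>{..<N}. x mod n = a}. z^x) = (\<Sum>x<N. if x mod n = a then z^x else 0)"
    by (rule sum.inter_filter) simp
  finally show ?thesis .
qed



lemma poly_lin: "poly [:1, - e:] (z::complex) = 1 - e * z"
  by (simp add: algebra_simps)

theorem theorem1p2:
  fixes k :: nat and lam :: "nat \<Rightarrow> int" and n :: "nat \<Rightarrow> nat" and a :: "nat \<Rightarrow> int"
    and p :: nat and \<zeta> :: complex
  assumes n_pos: "\<forall>s\<in>{1..k}. 0 < n s"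
    and a_range: "\<forall>s\<in>{1..k}. 0 \<le> a s \<and> a s < int (n s)"
    and p_prime: "prime p"
    and p_gt: "p > card (S_set k n)"
    and zeta: "primitive_root_of_unity p \<zeta>"
  shows "(\<forall>x::int. (\<Sum>s\<in>{s\<in>{1..k}. [x = a s] (mod int (n s))}. lam s) = 0)
     \<longleftrightarrow> (\<Sum>s=1..k. of_int (lam s) * \<zeta> ^ nat (a s) / (1 - \<zeta> ^ n s)) = 0"
proof -
  define K where "K = {1..k}"
  have finK: "finite K" by (simp add: K_def)
  define N where "N = (\<Prod>s\<in>K. n s)"
  define c where "c x = (\<Sum>s\<in>K. if [x = a s] (mod int (n s)) then lam s else 0)" for x :: int
  define F where "F z = (\<Sum>s\<in>K. of_int (lam s) * z ^ nat (a s) / (1 - z ^ n s))" for z :: complex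
  define T where "T = Sigma K (\<lambda>s. {..<n s})"
  define h where "h = (\<lambda>(s,j). (of_nat j / of_nat (n s) :: rat))"
  define S where "S = S_set k n"
  have lhs: "(\<Sum>s\<in>{s\<in>{1..k}. [x = a s] (mod int (n s))}. lam s) = c x" for x
    unfolding c_def K_def by (rule sum.inter_filter) simp
  have npos: "\<And>s. s \<in> K \<Longrightarrow> n s > 0" using n_pos K_def by auto
  have arange: "\<And>s. s \<in> K \<Longrightarrow> 0 \<le> a s \<and> a s < int (n s)" using a_range K_def by auto
  have p1: "p > 1" using p_prime prime_gt_1_nat by auto
  have zp: "\<zeta>^p = 1" using zeta by (simp add: primitive_root_of_unity_def)
  have zpow: "\<And>m. \<zeta>^m = 1 \<longleftrightarrow> p dvd m" using zeta_pow_eq1[OF zeta] by blast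
  have zn1: "\<zeta> \<noteq> 1" using zpow[of 1] p1 by auto
  have finT: "finite T" unfolding T_def using finK by auto
  have Seq: "S = h ` T"
    unfolding S_def S_set_def h_def T_def K_def by (auto simp: image_iff; blast)
  have finS: "finite S" using Seq finT by simp
  have nle: "n s \<le> card S" if s: "s \<in> K" for s
  proof -
    have "inj_on (\<lambda>j. of_nat j / of_nat (n s) :: rat) {..<n s}"
      using npos[OF s] by (auto simp: inj_on_def)
    moreover have "(\<lambda>j. of_nat j / of_nat (n s) :: rat) ` {..<n s} \<subseteq> S"
      unfolding Seq T_def h_def using s by force
    ultimately have "card {..<n s} \<le> card S" by (intro card_inj_on_le[OF _ _ finS])
    thus ?thesis by simp
  qed
  have pndvd: "\<not> p dvd n s" if s: "s \<in> K" for s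
  proof
    assume "p dvd n s"
    hence "p \<le> n s" using npos[OF s] by (simp add: dvd_imp_le)
    thus False using nle[OF s] p_gt unfolding S_def by simp
  qed
  have pndvdN: "\<not> p dvd N" unfolding N_def using pndvd finK p_prime by (simp add: prime_dvd_prod_iff)
  have Npos: "N > 0" unfolding N_def using npos finK by (simp add: prod_pos)
  have ndvdN: "n s dvd N" if "s \<in> K" for s unfolding N_def using that finK by auto
  have congiff: "(x mod n s = nat (a s)) \<longleftrightarrow> [int x = a s] (mod int (n s))" if s: "s \<in> K" for s x
  proof -
    have "[int x = a s] (mod int (n s)) \<longleftrightarrow> int x mod int (n s) = a s mod int (n s)" by (simp add: cong_def)
    also have "a s mod int (n s) = a s" using arange[OF s] by simp
    also have "int x mod int (n s) = int (x mod n s)" by (simp add: of_nat_mod)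
    finally show ?thesis using arange[OF s] by auto
  qed
  have Id1: "F z * (1 - z^N) = (\<Sum>x<N. of_int (c (int x)) * z^x)" if zn: "\<forall>s\<in>K. z ^ n s \<noteq> 1" for z
  proof -
    have "F z * (1 - z^N) = (\<Sum>s\<in>K. of_int (lam s) * (z ^ nat (a s) / (1 - z ^ n s) * (1 - z^N)))"
      unfolding F_def sum_distrib_right by (simp add: mult.assoc)
    also have "\<dots> = (\<Sum>s\<in>K. of_int (lam s) * (\<Sum>x<N. if x mod n s = nat (a s) then z^x else 0))"
    proof (rule sum.cong[OF refl])
      fix s assume s: "s \<in> K"
      have NM: "N = n s * (N div n s)" using ndvdN[OF s] by simp
      have "nat (a s) < n s" using arange[OF s] by auto
      from Id1s[OF npos[OF s] this NM] zn s
      have "z ^ nat (a s) / (1 - z ^ n s) * (1 - z^N) = (\<Sum>x<N. if x mod n s = nat (a s) then z^x else 0)" by blast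
      thus "of_int (lam s) * (z ^ nat (a s) / (1 - z ^ n s) * (1 - z^N)) = of_int (lam s) * (\<Sum>x<N. if x mod n s = nat (a s) then z^x else 0)"
        by auto
    qed
    also have "\<dots> = (\<Sum>x<N. \<Sum>s\<in>K. if x mod n s = nat (a s) then of_int (lam s) * z^x else 0)"
      by (subst sum.swap) (simp add: sum_distrib_left if_distrib cong: if_cong)
    also have "\<dots> = (\<Sum>x<N. of_int (c (int x)) * z^x)"
    proof (rule sum.cong[OF refl])
      fix x
      show "(\<Sum>s\<in>K. if x mod n s = nat (a s) then of_int (lam s) * z^x else 0) = of_int (c (int x)) * z^x"
        unfolding c_def of_int_sum sum_distrib_right
        by (rule sum.cong[OF refl]) (simp add: congiff)
    qed
    finally show ?thesis .
  qed
  define P where "P = (\<Sum>x<N. monom (c (int x)) x)"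
  have evP: "poly (map_poly of_int P) z = (\<Sum>x<N. of_int (c (int x)) * z^x)" for z :: complex
    unfolding P_def mp_sum poly_sum by (simp add: map_poly_monom poly_monom)
  have coeffP: "coeff P y = (if y < N then c (int y) else 0)" for y
    unfolding P_def coeff_sum by (simp add: coeff_monom)
  have period: "c x = c (int (nat (x mod int N)))" for x
  proof -
    have e: "int (nat (x mod int N)) = x mod int N" using Npos by simp
    show ?thesis unfolding e c_def
    proof (rule sum.cong[OF refl])
      fix s assume s: "s \<in> K"
      have "int (n s) dvd int N" using ndvdN[OF s] by simp
      hence "x mod int N mod int (n s) = x mod int (n s)" by (rule mod_mod_cancel)
      thus "(if [x = a s] (mod int (n s)) then lam s else 0) = (if [x mod int N = a s] (mod int (n s)) then lam s else 0)"
        by (simp add: cong_def)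
    qed
  qed
  have zs: "\<forall>s\<in>K. (\<zeta>^t) ^ n s \<noteq> 1" if "\<not> p dvd t" for t
  proof
    fix s assume s: "s \<in> K"
    have "\<not> p dvd t * n s" using that pndvd[OF s] p_prime by (simp add: prime_dvd_mult_iff)
    thus "(\<zeta>^t) ^ n s \<noteq> 1" using zpow by (simp add: power_mult[symmetric])
  qed
  have zN: "1 - (\<zeta>^t)^N \<noteq> 0" if "\<not> p dvd t" for t
  proof -
    have "\<not> p dvd t * N" using that pndvdN p_prime by (simp add: prime_dvd_mult_iff)
    thus ?thesis using zpow by (simp add: power_mult[symmetric])
  qed
  have eqF: "(\<Sum>s=1..k. of_int (lam s) * \<zeta> ^ nat (a s) / (1 - \<zeta> ^ n s)) = F \<zeta>"
    by (simp add: F_def K_def)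
  have nd1: "\<not> p dvd 1" using p1 by simp
  have fwd: "F \<zeta> = 0" if c0: "\<forall>x. c x = 0"
  proof -
    have "F \<zeta> * (1 - \<zeta>^N) = 0" using Id1[of \<zeta>] zs[OF nd1] c0 by simp
    thus ?thesis using zN[OF nd1] by simp
  qed
  have bwd: "\<forall>x. c x = 0" if F0: "F \<zeta> = 0"
  proof -
    have evz: "poly (map_poly of_int P) \<zeta> = 0" using Id1[of \<zeta>] zs[OF nd1] F0 evP by simp
    have ndt: "\<not> p dvd t" if t: "t \<in> {1..<p}" for t
      using t by (auto dest: dvd_imp_le)
    have Fw: "F (\<zeta>^t) = 0" if t: "t \<in> {1..<p}" for t
    proof -
      have nd: "\<not> p dvd t" using ndt[OF t] .
      have w1: "(\<zeta>^t)^p = 1" by (metis power_mult mult.commute zp power_one)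
      have w2: "\<zeta>^t \<noteq> 1" using zpow nd by simp
      have "poly (map_poly of_int P) (\<zeta>^t) = 0" by (rule conj_root[OF p_prime zp zn1 evz w1 w2])
      hence "F (\<zeta>^t) * (1 - (\<zeta>^t)^N) = 0" using Id1[OF zs[OF nd]] evP by simp
      thus ?thesis using zN[OF nd] by simp
    qed
    define E where "E q = cis (2 * pi * of_rat q)" for q :: rat
    define B where "B = (\<lambda>(s,j). of_int (lam s) * (cis (- (2*pi*real j*real (nat (a s))/real (n s))) / of_nat (n s)))"
    define A where "A r = (\<Sum>sj\<in>{sj\<in>T. h sj = r}. B sj)" for r
    have Eh: "E (h (s,j)) = cis (2*pi*real j/real (n s))" for s j
      unfolding E_def h_def by (simp add: of_rat_divide)
    have PFall: "F z = (\<Sum>r\<in>S. A r / (1 - E r * z))" if zn: "\<forall>s\<in>K. z ^ n s \<noteq> 1" for z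
    proof -
      have "F z = (\<Sum>s\<in>K. \<Sum>j<n s. B (s,j) / (1 - E (h (s,j)) * z))"
        unfolding F_def
      proof (rule sum.cong[OF refl])
        fix s assume s: "s \<in> K"
        have an: "nat (a s) < n s" using arange[OF s] by auto
        have eq: "z ^ nat (a s) / (1 - z ^ n s) = (\<Sum>j<n s. cis (- (2*pi*real j*real (nat (a s))/real (n s))) / of_nat (n s) / (1 - cis (2*pi*real j/real (n s)) * z))"
          by (rule PF[OF npos[OF s] an]) (use zn s in auto)
        have "of_int (lam s) * z ^ nat (a s) / (1 - z ^ n s) = of_int (lam s) * (z ^ nat (a s) / (1 - z ^ n s))" by simp
        also have "\<dots> = of_int (lam s) * (\<Sum>j<n s. cis (- (2*pi*real j*real (nat (a s))/real (n s))) / of_nat (n s) / (1 - cis (2*pi*real j/real (n s)) * z))"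
          by (simp only: eq)
        also have "\<dots> = (\<Sum>j<n s. B (s,j) / (1 - E (h (s,j)) * z))"
          by (simp add: sum_distrib_left B_def Eh)
        finally show "of_int (lam s) * z ^ nat (a s) / (1 - z ^ n s) = (\<Sum>j<n s. B (s,j) / (1 - E (h (s,j)) * z))" .
      qed
      also have "\<dots> = (\<Sum>(s,j)\<in>T. B (s,j) / (1 - E (h (s,j)) * z))"
        unfolding T_def by (rule sum.Sigma) (use finK in auto)
      also have "\<dots> = (\<Sum>sj\<in>T. B sj / (1 - E (h sj) * z))"
        by (rule sum.cong[OF refl]) auto
      also have "\<dots> = (\<Sum>r\<in>S. \<Sum>sj\<in>{sj. sj \<in> T \<and> h sj = r}. B sj / (1 - E (h sj) * z))"
        by (rule sum.group[OF finT finS, symmetric]) (simp add: Seq)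
      also have "\<dots> = (\<Sum>r\<in>S. A r / (1 - E r * z))"
        unfolding A_def sum_divide_distrib by (rule sum.cong[OF refl], rule sum.cong) auto
      finally show ?thesis .
    qed
    have Enz: "1 - E r * z \<noteq> 0" if zn: "\<forall>s\<in>K. z ^ n s \<noteq> 1" and r: "r \<in> S" for z r
    proof
      assume "1 - E r * z = 0"
      hence e1: "E r * z = 1" by simp
      obtain s j where sj: "(s,j) \<in> T" "r = h (s,j)" using r Seq by auto
      have s: "s \<in> K" using sj T_def by auto
      have "(E r * z) ^ n s = z ^ n s"
        unfolding sj(2) Eh power_mult_distrib using cis_root_pow[OF npos[OF s]] by simp
      thus False using e1 zn s by simp
    qed
    define g where "g = (\<Sum>r\<in>S. smult (A r) (\<Prod>r'\<in>S-{r}. [:1, - E r':]))"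
    have polyg: "poly g z = F z * (\<Prod>r\<in>S. (1 - E r * z))" if zn: "\<forall>s\<in>K. z ^ n s \<noteq> 1" for z
    proof -
      have "poly g z = (\<Sum>r\<in>S. A r * (\<Prod>r'\<in>S-{r}. (1 - E r' * z)))"
        by (simp add: g_def poly_sum poly_prod poly_lin mult.commute)
      also have "\<dots> = (\<Sum>r\<in>S. A r / (1 - E r * z) * (\<Prod>r\<in>S. (1 - E r * z)))"
      proof (rule sum.cong[OF refl])
        fix r assume r: "r \<in> S"
        have "(\<Prod>r\<in>S. (1 - E r * z)) = (1 - E r * z) * (\<Prod>r'\<in>S-{r}. (1 - E r' * z))"
          by (rule prod.remove[OF finS r])
        thus "A r * (\<Prod>r'\<in>S-{r}. (1 - E r' * z)) = A r / (1 - E r * z) * (\<Prod>r\<in>S. (1 - E r * z))"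
          using Enz[OF zn r] by simp
      qed
      also have "\<dots> = F z * (\<Prod>r\<in>S. (1 - E r * z))"
        by (simp only: sum_distrib_right[symmetric] PFall[OF zn])
      finally show ?thesis .
    qed
    have degg: "degree g \<le> card S - 1"
      unfolding g_def
    proof (rule degree_sum_le[OF finS])
      fix r assume r: "r \<in> S"
      have "degree (\<Prod>r'\<in>S-{r}. [:1, - E r':]) \<le> (\<Sum>r'\<in>S-{r}. degree [:1, - E r':])"
        using degree_prod_sum_le[of "S-{r}" "\<lambda>r'. [:1, - E r':]"] finS by (simp add: o_def)
      also have "\<dots> \<le> (\<Sum>r'\<in>S-{r}. 1)" by (rule sum_mono) simp
      also have "\<dots> = card S - 1" using r finS by simp
      finally show "degree (smult (A r) (\<Prod>r'\<in>S-{r}. [:1, - E r':])) \<le> card S - 1"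
        using degree_smult_le le_trans by blast
    qed
    have zne: "\<zeta>^t \<noteq> \<zeta>^u" if tu: "t < u" "u < p" for t u
    proof
      assume e: "\<zeta>^t = \<zeta>^u"
      have z0: "\<zeta> \<noteq> 0" using zp p1 by (auto simp: power_0_left)
      have "\<zeta>^u = \<zeta>^t * \<zeta>^(u-t)" using tu by (simp add: power_add[symmetric])
      hence "\<zeta>^(u-t) = 1" using e z0 by simp
      hence "p dvd u - t" using zpow by simp
      moreover have "0 < u - t" "u - t < p" using tu by auto
      ultimately show False by (auto dest: dvd_imp_le)
    qed
    have g0: "g = 0"
    proof (rule ccontr)
      assume gnz: "g \<noteq> 0"
      have sub: "(\<lambda>t. \<zeta>^t) ` {1..<p} \<subseteq> {z. poly g z = 0}"
      proof
        fix z assume "z \<in> (\<lambda>t. \<zeta>^t) ` {1..<p}"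
        then obtain t where t: "t \<in> {1..<p}" "z = \<zeta>^t" by auto
        show "z \<in> {z. poly g z = 0}" using polyg[OF zs[OF ndt[OF t(1)]]] Fw[OF t(1)] t(2) by simp
      qed
      have inj: "inj_on (\<lambda>t. \<zeta>^t) {1..<p}"
      proof (rule inj_onI)
        fix t u assume t: "t \<in> {1..<p}" and u: "u \<in> {1..<p}" and e: "\<zeta>^t = \<zeta>^u"
        show "t = u"
        proof (cases t u rule: linorder_cases)
          case less then show ?thesis using zne[of t u] u e by auto
        next
          case greater then show ?thesis using zne[of u t] t e by auto
        qed simp
      qed
      have "p - 1 = card ((\<lambda>t. \<zeta>^t) ` {1..<p})" using card_image[OF inj] by simp
      also have "\<dots> \<le> card {z. poly g z = 0}" by (rule card_mono[OF poly_roots_finite[OF gnz] sub])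
      also have "\<dots> \<le> degree g" by (rule card_poly_roots_bound[OF gnz])
      also have "\<dots> \<le> card S - 1" by (rule degg)
      finally show False using p_gt p1 unfolding S_def by linarith
    qed
    have roots: "poly (map_poly of_int P) (complex_of_real u) = 0" if u: "0 < u" "u < 1" for u :: real
    proof -
      define z where "z = complex_of_real u"
      have zn: "\<forall>s\<in>K. z ^ n s \<noteq> 1"
      proof
        fix s assume s: "s \<in> K"
        have "u ^ n s < 1" using u npos[OF s] by (simp add: power_less_one_iff)
        hence "u ^ n s \<noteq> 1" by simp
        thus "z ^ n s \<noteq> 1" unfolding z_def by (metis of_real_eq_1_iff of_real_power)
      qed
      have "F z * (\<Prod>r\<in>S. (1 - E r * z)) = 0" using polyg[OF zn] g0 by simp
      moreover have "(\<Prod>r\<in>S. (1 - E r * z)) \<noteq> 0" using Enz[OF zn] finS by simp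
      ultimately have "F z = 0" by simp
      thus ?thesis using Id1[OF zn] evP unfolding z_def by simp
    qed
    have mp0: "map_poly of_int P = (0 :: complex poly)"
    proof (rule ccontr)
      assume nz: "map_poly of_int P \<noteq> (0::complex poly)"
      have "complex_of_real ` {0<..<1::real} \<subseteq> {z. poly (map_poly of_int P) z = 0}" using roots by auto
      moreover have "infinite (complex_of_real ` {0<..<1::real})"
        by (subst finite_image_iff) (auto simp: inj_on_def infinite_Ioo)
      ultimately show False using poly_roots_finite[OF nz] finite_subset by blast
    qed
    have cP: "c (int y) = 0" if y: "y < N" for y
    proof -
      have "coeff (map_poly of_int P) y = (0::complex)" using mp0 by simp
      hence "(of_int (coeff P y) :: complex) = 0" by (simp add: coeff_map_poly)
      hence "coeff P y = 0" by simp
      thus ?thesis using coeffP y by simp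
    qed
    show ?thesis
    proof
      fix x
      have "x mod int N \<ge> 0" "x mod int N < int N" using Npos by auto
      hence "nat (x mod int N) < N" by linarith
      hence "c (int (nat (x mod int N))) = 0" by (rule cP)
      thus "c x = 0" using period[of x] by simp
    qed
  qed
  show ?thesis unfolding lhs eqF using fwd bwd by blast
qed


end
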